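(* Let $\mathcal{X}$ be a finite set, $P_X$ a probability distribution on $\mathcal{X}$ with $P_X(x)>0$ for all $x$, $X\sim P_X$, and let $\gamma>0$ and $\rho>0$. Let $\hat X_1,\hat X_2,\dots$ be i.i.d., independent of $X$, with law $$\hat P^*_\gamma(x)=\frac{P_X(x)^{\frac{1}{1+\gamma}}}{\sum_{x'\in\mathcal{X}}P_X(x')^{\frac{1}{1+\gamma}}}.$$ Let $G(X,\hat X_1^\infty)=\inf\{k\ge1:\hat X_k=X\}$ and $V_\rho(X,\hat X_1^\infty)=\binom{G(X,\hat X_1^\infty)+\rho-1}{\rho}$. Then $$\log\mathbb{E}\{V_\rho(X,\hat X_1^\infty)\}=\frac{\rho}{1+\gamma}H_{\frac{\gamma-\rho+1}{1+\gamma}}(X)+\frac{\gamma\rho}{1+\gamma}H_{\frac{1}{1+\gamma}}(X).$$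
   Context: $\binom{x}{y}=\frac{\Gamma(x+1)}{\Gamma(y+1)\Gamma(x-y+1)}$. Logarithms are natural. For real $\alpha\ne1$, $H_\alpha(X)=\frac{1}{1-\alpha}\log\sum_{x\in\mathcal{X}}P_X(x)^\alpha$. *)

theory Defs
  imports "HOL-Probability.Probability"
begin

definition gbinom :: "real \<Rightarrow> real \<Rightarrow> real" where
  "gbinom x y = Gamma (x + 1) / (Gamma (y + 1) * Gamma (x - y + 1))"

definition renyi_entropy :: "('b::finite \<Rightarrow> real) \<Rightarrow> real \<Rightarrow> real" where
  "renyi_entropy P \<alpha> = 1 / (1 - \<alpha>) * ln (\<Sum>x\<in>UNIV. P x powr \<alpha>)"

definition tilted :: "('b::finite \<Rightarrow> real) \<Rightarrow> real \<Rightarrow> 'b \<Rightarrow> real" where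
  "tilted P \<gamma> x = P x powr (1 / (1 + \<gamma>)) / (\<Sum>x'\<in>UNIV. P x' powr (1 / (1 + \<gamma>)))"

definition guess_time :: "'b \<Rightarrow> (nat \<Rightarrow> 'b) \<Rightarrow> enat" where
  "guess_time x xs = (INF k \<in> {k. 1 \<le> k \<and> xs k = x}. enat k)"

definition V_rho :: "real \<Rightarrow> 'b \<Rightarrow> (nat \<Rightarrow> 'b) \<Rightarrow> ennreal" where
  "V_rho \<rho> x xs = (case guess_time x xs of
      enat k \<Rightarrow> ennreal (gbinom (real k + \<rho> - 1) \<rho>)
    | \<infinity> \<Rightarrow> \<infinity>)"

end

theory Submission imports Defs begin
lemma gbinom_series:
  fixes z \<rho> :: real
  assumes "0 \<le> z" "z < 1" "\<rho> > 0"
  shows "(\<lambda>n. gbinom (real (Suc n) + \<rho> - 1) \<rho> * z ^ n) sums (1 - z) powr (-(\<rho> + 1))"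
proof -
  have "\<bar>-z\<bar> < 1" using assms by simp
  from gen_binomial_real[OF this, of "-(\<rho>+1)"]
  have s: "(\<lambda>n. (-(\<rho>+1) gchoose n) * (-z)^n) sums (1 - z) powr (-(\<rho>+1))" by simp
  have ni: "\<rho> + 1 \<notin> \<int>\<^sub>\<le>\<^sub>0" using assms
    by (metis add_pos_pos less_numeral_extra(1) nonpos_Ints_cases of_int_le_0_iff leD)
  have "(-(\<rho>+1) gchoose n) * (-z)^n = gbinom (real (Suc n) + \<rho> - 1) \<rho> * z ^ n" for n
  proof -
    have "(-(\<rho>+1) gchoose n) * (-z)^n = ((-1)^n * (-1)^n) * pochhammer (\<rho>+1) n / fact n * z^n"
    proof -
      have "(-(\<rho>+1) gchoose n) = (-1)^n * pochhammer (\<rho>+1) n / fact n"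
        by (simp add: gbinomial_pochhammer add.commute)
      moreover have "(-z)^n = (-1)^n * z^n" by (rule power_minus)
      ultimately show ?thesis by simp
    qed
    also have "(-1::real)^n * (-1)^n = 1" by (simp flip: power_add)
    also have "pochhammer (\<rho>+1) n = Gamma (\<rho> + 1 + real n) / Gamma (\<rho> + 1)"
      using pochhammer_Gamma[OF ni] by simp
    also have "(fact n :: real) = Gamma (1 + real n)" using Gamma_fact[of n, where 'a=real] by simp
    finally show ?thesis unfolding gbinom_def by (simp add: field_simps)
  qed
  with s show ?thesis by simp
qed
lemma guess_time_none: "(\<forall>k\<ge>1. xs k \<noteq> x) \<Longrightarrow> guess_time x xs = \<infinity>"
  unfolding guess_time_def by (auto simp: top_enat_def[symmetric])

lemma guess_time_some:
  assumes "k \<ge> 1" "xs k = x"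
  shows "guess_time x xs = enat (LEAST k. 1 \<le> k \<and> xs k = x)"
proof -
  let ?m = "LEAST k. 1 \<le> k \<and> xs k = x"
  have m: "1 \<le> ?m \<and> xs ?m = x" by (rule LeastI[of _ k]) (use assms in auto)
  show ?thesis unfolding guess_time_def
  proof (rule antisym)
    show "(INF k \<in> {k. 1 \<le> k \<and> xs k = x}. enat k) \<le> enat ?m" by (rule INF_lower) (use m in auto)
    show "enat ?m \<le> (INF k \<in> {k. 1 \<le> k \<and> xs k = x}. enat k)"
      by (rule INF_greatest) (auto intro: Least_le)
  qed
qed

lemma prod_geom: "(\<Prod>i\<in>{0..n::nat}. if i = 0 then a else b) = a * (b::real) ^ n"
  by (induction n) (auto simp: prod.atLeast0_atMost_Suc)

theorem corollary2:
  fixes M :: "'a measure"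
    and P :: "'b::finite \<Rightarrow> real"
    and X :: "'a \<Rightarrow> 'b"
    and Xh :: "nat \<Rightarrow> 'a \<Rightarrow> 'b"
    and \<gamma> \<rho> :: real
  assumes "prob_space M"
    and P_pos: "\<And>x. P x > 0"
    and P_sum: "(\<Sum>x\<in>UNIV. P x) = 1"
    and "\<gamma> > 0" and "\<rho> > 0"
    and indep: "prob_space.indep_vars M (\<lambda>_. count_space UNIV)
                  (\<lambda>i. if i = 0 then X else Xh i) UNIV"
    and distX: "\<And>x. measure M {\<omega> \<in> space M. X \<omega> = x} = P x"
    and distXh: "\<And>k x. k \<ge> 1 \<Longrightarrow>
                   measure M {\<omega> \<in> space M. Xh k \<omega> = x} = tilted P \<gamma> x"
  shows "(\<integral>\<^sup>+ \<omega>. V_rho \<rho> (X \<omega>) (\<lambda>k. Xh k \<omega>) \<partial>M) < \<infinity> \<and>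
         ln (enn2real (\<integral>\<^sup>+ \<omega>. V_rho \<rho> (X \<omega>) (\<lambda>k. Xh k \<omega>) \<partial>M))
           = \<rho> / (1 + \<gamma>) * renyi_entropy P ((\<gamma> - \<rho> + 1) / (1 + \<gamma>))
             + \<gamma> * \<rho> / (1 + \<gamma>) * renyi_entropy P (1 / (1 + \<gamma>))"
proof -
  interpret prob_space M by fact
  define Y where "Y = (\<lambda>i. if i = 0 then X else Xh i)"
  define Z where "Z = (\<lambda>i. Xh (Suc i))"
  define Q where "Q = tilted P \<gamma>"
  define a where "a = 1 / (1 + \<gamma>)"
  define S where "S = (\<Sum>x\<in>UNIV. P x powr a)"
  have Pa_pos: "P x powr a > 0" for x using P_pos[of x] by simp
  have S_pos: "S > 0" unfolding S_def
    by (rule sum_pos) (use Pa_pos in auto)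
  have Q_eq: "Q x = P x powr a / S" for x unfolding Q_def tilted_def S_def a_def by simp
  have Q_pos: "Q x > 0" for x using Q_eq S_pos Pa_pos by simp
  have Q_le: "Q x \<le> 1" for x
  proof -
    have "P x powr a \<le> S" unfolding S_def by (rule member_le_sum) (use Pa_pos in auto)
    thus ?thesis using Q_eq S_pos by simp
  qed
  have indY: "indep_vars (\<lambda>_. count_space UNIV) Y UNIV" using indep unfolding Y_def by simp
  have rvY: "Y i \<in> measurable M (count_space UNIV)" for i
    using indY unfolding indep_vars_def2 by auto
  have [measurable]: "X \<in> measurable M (count_space UNIV)" using rvY[of 0] by (simp add: Y_def)
  have [measurable]: "Z i \<in> measurable M (count_space UNIV)" for i
    using rvY[of "Suc i"] by (simp add: Y_def Z_def)
  have YZ: "Y (Suc i) = Z i" for i by (simp add: Y_def Z_def)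
  have Y0: "Y 0 = X" by (simp add: Y_def)
  have distZ: "prob {\<omega> \<in> space M. Z i \<omega> = x} = Q x" for i x
    unfolding Z_def Q_def by (rule distXh) simp
  define B where "B x n = {\<omega> \<in> space M. X \<omega> = x \<and> (\<forall>j<n. Z j \<omega> \<noteq> x)}" for x n
  define E where "E x n = {\<omega> \<in> space M. X \<omega> = x \<and> (\<forall>j<n. Z j \<omega> \<noteq> x) \<and> Z n \<omega> = x}" for x n
  define N where "N = {\<omega> \<in> space M. \<forall>k. Z k \<omega> \<noteq> X \<omega>}"
  have B_sets[measurable]: "B x n \<in> sets M" for x n unfolding B_def by measurable
  have E_sets[measurable]: "E x n \<in> sets M" for x n unfolding E_def by measurable
  have N_sets[measurable]: "N \<in> sets M" unfolding N_def by measurable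
  have py: "prob (Y i -` {x} \<inter> space M) = (if i = 0 then P x else Q x)" for i x
  proof (cases i)
    case 0
    have "Y i -` {x} \<inter> space M = {\<omega> \<in> space M. X \<omega> = x}" using 0 Y0 by auto
    then show ?thesis using 0 distX by simp
  next
    case (Suc j)
    have "Y i -` {x} \<inter> space M = {\<omega> \<in> space M. Z j \<omega> = x}" using Suc YZ by auto
    then show ?thesis using Suc distZ by simp
  qed
  have pyc: "prob (Y i -` (-{x}) \<inter> space M) = 1 - (if i = 0 then P x else Q x)" for i x
  proof -
    have "Y i -` (-{x}) \<inter> space M = space M - (Y i -` {x} \<inter> space M)" by auto
    moreover have "Y i -` {x} \<inter> space M \<in> sets M"
      using rvY[of i] by (simp add: measurable_sets)
    ultimately show ?thesis using py[of i x] prob_compl by simp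
  qed
  have probB: "prob (B x n) = P x * (1 - Q x) ^ n" for x n
  proof -
    define A where "A i = (if i = 0 then {x} else -{x})" for i :: nat
    have "(\<Inter>i\<in>{0..n}. Y i -` A i \<inter> space M) = B x n"
    proof (intro set_eqI iffI)
      fix \<omega> assume h0: "\<omega> \<in> (\<Inter>i\<in>{0..n}. Y i -` A i \<inter> space M)"
      then have h: "\<And>i. i \<le> n \<Longrightarrow> Y i \<omega> \<in> A i" and sp: "\<omega> \<in> space M" by auto
      have "X \<omega> = x" using h[of 0] Y0 A_def by simp
      moreover have "Z j \<omega> \<noteq> x" if "j < n" for j using h[of "Suc j"] that YZ A_def by simp
      ultimately show "\<omega> \<in> B x n" using sp B_def by simp
    next
      fix \<omega> assume "\<omega> \<in> B x n"
      then have sp: "\<omega> \<in> space M" and h1: "X \<omega> = x" and h2: "\<And>j. j < n \<Longrightarrow> Z j \<omega> \<noteq> x"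
        by (auto simp: B_def)
      have "Y i \<omega> \<in> A i" if "i \<le> n" for i
      proof (cases i)
        case 0 then show ?thesis using h1 Y0 A_def by simp
      next
        case (Suc j) then show ?thesis using h2[of j] that YZ A_def by simp
      qed
      then show "\<omega> \<in> (\<Inter>i\<in>{0..n}. Y i -` A i \<inter> space M)" using sp by auto
    qed
    then have "prob (B x n) = (\<Prod>i\<in>{0..n}. prob (Y i -` A i \<inter> space M))"
      using indep_varsD[OF indY, of "{0..n}" A] by auto
    also have "\<dots> = (\<Prod>i\<in>{0..n}. if i = 0 then P x else 1 - Q x)"
      by (rule prod.cong) (auto simp: A_def py pyc)
    also have "\<dots> = P x * (1 - Q x) ^ n" by (rule prod_geom)
    finally show ?thesis .
  qed
  have probE: "prob (E x n) = P x * (1 - Q x) ^ n * Q x" for x n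
  proof -
    define A where "A i = (if i = 0 then {x} else if i = Suc n then {x} else -{x})" for i :: nat
    have "(\<Inter>i\<in>{0..Suc n}. Y i -` A i \<inter> space M) = E x n"
    proof (intro set_eqI iffI)
      fix \<omega> assume h0: "\<omega> \<in> (\<Inter>i\<in>{0..Suc n}. Y i -` A i \<inter> space M)"
      then have h: "\<And>i. i \<le> Suc n \<Longrightarrow> Y i \<omega> \<in> A i" and sp: "\<omega> \<in> space M" by auto
      have "X \<omega> = x" using h[of 0] Y0 A_def by simp
      moreover have "Z j \<omega> \<noteq> x" if "j < n" for j using h[of "Suc j"] that YZ A_def by simp
      moreover have "Z n \<omega> = x" using h[of "Suc n"] YZ A_def by simp
      ultimately show "\<omega> \<in> E x n" using sp E_def by simp
    next
      fix \<omega> assume "\<omega> \<in> E x n"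
      then have sp: "\<omega> \<in> space M" and h1: "X \<omega> = x" and h2: "\<And>j. j < n \<Longrightarrow> Z j \<omega> \<noteq> x"
         and h3: "Z n \<omega> = x"
        by (auto simp: E_def)
      have "Y i \<omega> \<in> A i" if "i \<le> Suc n" for i
      proof (cases i)
        case 0 then show ?thesis using h1 Y0 A_def by simp
      next
        case (Suc j) then show ?thesis using h2[of j] h3 that YZ A_def by auto
      qed
      then show "\<omega> \<in> (\<Inter>i\<in>{0..Suc n}. Y i -` A i \<inter> space M)" using sp by auto
    qed
    then have "prob (E x n) = (\<Prod>i\<in>{0..Suc n}. prob (Y i -` A i \<inter> space M))"
      using indep_varsD[OF indY, of "{0..Suc n}" A] by auto
    also have "\<dots> = (\<Prod>i\<in>{0..n}. prob (Y i -` A i \<inter> space M)) * Q x"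
      by (simp add: prod.atLeast0_atMost_Suc A_def py)
    also have "(\<Prod>i\<in>{0..n}. prob (Y i -` A i \<inter> space M)) = (\<Prod>i\<in>{0..n}. if i = 0 then P x else 1 - Q x)"
      by (rule prod.cong) (auto simp: A_def py pyc)
    also have "\<dots> = P x * (1 - Q x) ^ n" by (rule prod_geom)
    finally show ?thesis .
  qed
  have N_null: "emeasure M N = 0"
  proof -
    have le: "prob N \<le> (\<Sum>x\<in>UNIV. P x * (1 - Q x) ^ n)" for n
    proof -
      have "N \<subseteq> (\<Union>x. B x n)" unfolding N_def B_def by auto
      then have "prob N \<le> prob (\<Union>x. B x n)" by (intro finite_measure_mono) auto
      also have "\<dots> \<le> (\<Sum>x\<in>UNIV. prob (B x n))" by (rule measure_UNION_le) auto
      finally show ?thesis by (simp add: probB)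
    qed
    have "(\<lambda>n. \<Sum>x\<in>UNIV. P x * (1 - Q x) ^ n) \<longlonglongrightarrow> (\<Sum>x\<in>(UNIV::'b set). 0)"
    proof (rule tendsto_sum)
      fix x :: 'b
      have "norm (1 - Q x) < 1" using Q_pos[of x] Q_le[of x] by simp
      then have "(\<lambda>n. (1 - Q x) ^ n) \<longlonglongrightarrow> 0" by (rule LIMSEQ_power_zero)
      then show "(\<lambda>n. P x * (1 - Q x) ^ n) \<longlonglongrightarrow> 0" by (rule tendsto_mult_right_zero)
    qed
    then have "prob N \<le> (\<Sum>x\<in>(UNIV::'b set). 0)"
      by (rule LIMSEQ_le_const) (use le in auto)
    then have "prob N \<le> 0" by simp
    then have "prob N = 0" using measure_nonneg[of M N] by linarith
    then show ?thesis by (simp add: emeasure_eq_measure)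
  qed
  define g where "g n = gbinom (real (Suc n) + \<rho> - 1) \<rho>" for n
  have decomp: "V_rho \<rho> (X \<omega>) (\<lambda>k. Xh k \<omega>) =
      (\<Sum>n. \<Sum>x\<in>UNIV. ennreal (g n) * indicator (E x n) \<omega>) + \<infinity> * indicator N \<omega>"
    if sp: "\<omega> \<in> space M" for \<omega>
  proof (cases "\<omega> \<in> N")
    case True
    then have "\<forall>k\<ge>1. Xh k \<omega> \<noteq> X \<omega>" unfolding N_def Z_def
      by (auto simp: Suc_le_eq dest!: gr0_implies_Suc)
    then have "guess_time (X \<omega>) (\<lambda>k. Xh k \<omega>) = \<infinity>" by (intro guess_time_none) auto
    then show ?thesis using True by (simp add: V_rho_def)
  next
    case False
    then obtain j where j: "Z j \<omega> = X \<omega>" using sp unfolding N_def by auto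
    define m where "m = (LEAST k. 1 \<le> k \<and> Xh k \<omega> = X \<omega>)"
    have gt: "guess_time (X \<omega>) (\<lambda>k. Xh k \<omega>) = enat m"
      unfolding m_def by (rule guess_time_some[of "Suc j"]) (use j Z_def in auto)
    have m1: "1 \<le> m \<and> Xh m \<omega> = X \<omega>" unfolding m_def
      by (rule LeastI[of _ "Suc j"]) (use j Z_def in auto)
    have claim: "\<omega> \<in> E x n \<longleftrightarrow> x = X \<omega> \<and> n = m - 1" for x n
    proof
      assume "\<omega> \<in> E x n"
      then have h1: "X \<omega> = x" and h2: "\<And>j. j < n \<Longrightarrow> Xh (Suc j) \<omega> \<noteq> x" and h3: "Xh (Suc n) \<omega> = x"
        by (auto simp: E_def Z_def)
      have "m = Suc n" unfolding m_def
      proof (rule Least_equality)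
        show "1 \<le> Suc n \<and> Xh (Suc n) \<omega> = X \<omega>" using h1 h3 by simp
        fix y assume y: "1 \<le> y \<and> Xh y \<omega> = X \<omega>"
        show "Suc n \<le> y"
        proof (rule ccontr)
          assume "\<not> Suc n \<le> y"
          then obtain i where "y = Suc i" "i < n" using y by (cases y) auto
          then show False using h2[of i] y h1 by simp
        qed
      qed
      then show "x = X \<omega> \<and> n = m - 1" using h1 by simp
    next
      assume h: "x = X \<omega> \<and> n = m - 1"
      have "Xh (Suc i) \<omega> \<noteq> x" if "i < n" for i
      proof -
        have "Suc i < m" using that h m1 by simp
        then have "\<not> (1 \<le> Suc i \<and> Xh (Suc i) \<omega> = X \<omega>)" unfolding m_def by (rule not_less_Least)
        then show ?thesis using h by simp
      qed
      moreover have "Xh (Suc n) \<omega> = x" using h m1 by simp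
      ultimately show "\<omega> \<in> E x n" using sp h by (simp add: E_def Z_def)
    qed
    have inner: "(\<Sum>x\<in>UNIV. ennreal (g n) * indicator (E x n) \<omega>) = (if n = m - 1 then ennreal (g n) else 0)" for n
    proof -
      have "(\<Sum>x\<in>UNIV. ennreal (g n) * indicator (E x n) \<omega>) = (\<Sum>x\<in>UNIV. if x = X \<omega> then (if n = m - 1 then ennreal (g n) else 0) else 0)"
        by (rule sum.cong) (auto simp: claim indicator_def)
      also have "\<dots> = (if n = m - 1 then ennreal (g n) else 0)" by simp
      finally show ?thesis .
    qed
    have "(\<lambda>n. if n = m - 1 then ennreal (g n) else 0) sums ennreal (g (m - 1))" by (rule sums_single)
    then have "(\<Sum>n. \<Sum>x\<in>UNIV. ennreal (g n) * indicator (E x n) \<omega>) = ennreal (g (m - 1))"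
      by (simp add: inner sums_iff)
    moreover have "g (m - 1) = gbinom (real m + \<rho> - 1) \<rho>" using m1 by (simp add: g_def)
    ultimately show ?thesis using False gt by (simp add: V_rho_def)
  qed
  have g_nonneg: "g n \<ge> 0" for n
  proof -
    have "Gamma (real n + \<rho> + 1) > 0" "Gamma (\<rho> + 1) > 0" "Gamma (real n + 1) > 0"
      using \<open>\<rho> > 0\<close> by (auto intro!: Gamma_real_pos)
    then show ?thesis unfolding g_def gbinom_def by (simp add: add_ac)
  qed
  have tnn: "0 \<le> P x * (1 - Q x) ^ n * Q x" for x n
    using P_pos[of x] Q_pos[of x] Q_le[of x] by (auto intro!: mult_nonneg_nonneg less_imp_le)
  define L where "L = (\<Sum>x\<in>UNIV. P x * Q x * Q x powr (-(\<rho>+1)))"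
  define t where "t n = (\<Sum>x\<in>UNIV. g n * (P x * (1 - Q x) ^ n * Q x))" for n
  have t_sums: "t sums L"
    unfolding t_def L_def
  proof (rule sums_sum)
    fix x :: 'b
    have "(\<lambda>n. g n * (1 - Q x) ^ n) sums (1 - (1 - Q x)) powr (-(\<rho>+1))"
      unfolding g_def by (rule gbinom_series) (use Q_pos[of x] Q_le[of x] \<open>\<rho> > 0\<close> in auto)
    then have "(\<lambda>n. g n * (1 - Q x) ^ n * (P x * Q x)) sums (Q x powr (-(\<rho>+1)) * (P x * Q x))"
      by (intro sums_mult2) simp
    then show "(\<lambda>n. g n * (P x * (1 - Q x) ^ n * Q x)) sums (P x * Q x * Q x powr (-(\<rho>+1)))"
      by (simp add: mult_ac)
  qed
  have t_nonneg: "t n \<ge> 0" for n unfolding t_def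
    by (intro sum_nonneg mult_nonneg_nonneg g_nonneg tnn)
  have integral: "(\<integral>\<^sup>+ \<omega>. V_rho \<rho> (X \<omega>) (\<lambda>k. Xh k \<omega>) \<partial>M) = ennreal L"
  proof -
    have "(\<integral>\<^sup>+ \<omega>. V_rho \<rho> (X \<omega>) (\<lambda>k. Xh k \<omega>) \<partial>M) =
       (\<integral>\<^sup>+ \<omega>. (\<Sum>n. \<Sum>x\<in>UNIV. ennreal (g n) * indicator (E x n) \<omega>) + \<infinity> * indicator N \<omega> \<partial>M)"
      by (rule nn_integral_cong) (simp add: decomp)
    also have "\<dots> = (\<integral>\<^sup>+ \<omega>. (\<Sum>n. \<Sum>x\<in>UNIV. ennreal (g n) * indicator (E x n) \<omega>) \<partial>M)
        + (\<integral>\<^sup>+ \<omega>. \<infinity> * indicator N \<omega> \<partial>M)"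
      by (rule nn_integral_add) measurable
    also have "(\<integral>\<^sup>+ \<omega>. \<infinity> * indicator N \<omega> \<partial>M) = 0"
      using N_null by (simp add: nn_integral_cmult_indicator)
    also have "(\<integral>\<^sup>+ \<omega>. (\<Sum>n. \<Sum>x\<in>UNIV. ennreal (g n) * indicator (E x n) \<omega>) \<partial>M)
        = (\<Sum>n. \<integral>\<^sup>+ \<omega>. (\<Sum>x\<in>UNIV. ennreal (g n) * indicator (E x n) \<omega>) \<partial>M)"
      by (rule nn_integral_suminf) measurable
    also have "\<dots> = (\<Sum>n. ennreal (t n))"
    proof (rule suminf_cong)
      fix n
      have "(\<integral>\<^sup>+ \<omega>. (\<Sum>x\<in>UNIV. ennreal (g n) * indicator (E x n) \<omega>) \<partial>M)
          = (\<Sum>x\<in>UNIV. \<integral>\<^sup>+ \<omega>. ennreal (g n) * indicator (E x n) \<omega> \<partial>M)"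
        by (rule nn_integral_sum) measurable
      also have "\<dots> = (\<Sum>x\<in>UNIV. ennreal (g n * (P x * (1 - Q x) ^ n * Q x)))"
      proof (rule sum.cong)
        fix x :: 'b
        have nn: "0 \<le> P x * (1 - Q x) ^ n * Q x"
          using P_pos[of x] Q_pos[of x] Q_le[of x] by (auto intro!: mult_nonneg_nonneg less_imp_le)
        show "(\<integral>\<^sup>+ \<omega>. ennreal (g n) * indicator (E x n) \<omega> \<partial>M) = ennreal (g n * (P x * (1 - Q x) ^ n * Q x))"
          using nn g_nonneg[of n] by (simp add: nn_integral_cmult_indicator emeasure_eq_measure probE ennreal_mult)
      qed simp
      also have "\<dots> = ennreal (t n)" unfolding t_def
        by (rule sum_ennreal) (rule mult_nonneg_nonneg[OF g_nonneg tnn])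
      finally show "(\<integral>\<^sup>+ \<omega>. (\<Sum>x\<in>UNIV. ennreal (g n) * indicator (E x n) \<omega>) \<partial>M) = ennreal (t n)" .
    qed
    also have "\<dots> = ennreal L"
    proof -
      have "L \<ge> 0" using sums_le[of "\<lambda>_. 0" t 0 L] t_nonneg t_sums by simp
      then have "(\<lambda>n. ennreal (t n)) sums ennreal L" using t_sums t_nonneg by simp
      then show ?thesis by (simp add: sums_iff)
    qed
    finally show ?thesis by simp
  qed
  define T where "T = (\<Sum>x\<in>UNIV. P x powr ((\<gamma> - \<rho> + 1) / (1 + \<gamma>)))"
  have T_pos: "T > 0" unfolding T_def
    by (rule sum_pos) (use P_pos in \<open>auto, metis less_irrefl\<close>)
  have term_eq: "P x * Q x * Q x powr (-(\<rho>+1)) = S powr \<rho> * P x powr ((\<gamma> - \<rho> + 1) / (1 + \<gamma>))" for x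
  proof -
    have Px: "P x > 0" by (rule P_pos)
    have "Q x * Q x powr (-(\<rho>+1)) = Q x powr (-\<rho>)"
    proof -
      have "Q x powr (-\<rho>) = Q x powr (1 + (-(\<rho>+1)))" by simp
      also have "\<dots> = Q x powr 1 * Q x powr (-(\<rho>+1))" by (rule powr_add)
      finally show ?thesis using Q_pos[of x] by simp
    qed
    also have "\<dots> = (P x powr a) powr (-\<rho>) / S powr (-\<rho>)"
      using Q_eq[of x] S_pos Px by (simp add: powr_divide)
    also have "\<dots> = P x powr (- a * \<rho>) * S powr \<rho>"
      using S_pos by (simp add: powr_powr powr_minus_divide powr_minus)
    finally have "P x * Q x * Q x powr (-(\<rho>+1)) = S powr \<rho> * (P x powr 1 * P x powr (- a * \<rho>))"
      using Px by (simp add: mult_ac)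
    also have "P x powr 1 * P x powr (- a * \<rho>) = P x powr (1 - a * \<rho>)"
      by (simp only: powr_add[symmetric]) simp
    also have "1 - a * \<rho> = (\<gamma> - \<rho> + 1) / (1 + \<gamma>)"
      unfolding a_def using \<open>\<gamma> > 0\<close> by (simp add: field_simps)
    finally show ?thesis .
  qed
  have L_eq: "L = S powr \<rho> * T" unfolding L_def T_def sum_distrib_left by (rule sum.cong) (use term_eq in auto)
  have lnL: "ln L = \<rho> * ln S + ln T" using S_pos T_pos L_eq by (simp add: ln_mult ln_powr)
  have r1: "\<rho> / (1 + \<gamma>) * renyi_entropy P ((\<gamma> - \<rho> + 1) / (1 + \<gamma>)) = ln T"
  proof -
    have "1 - (\<gamma> - \<rho> + 1) / (1 + \<gamma>) = \<rho> / (1 + \<gamma>)" using \<open>\<gamma> > 0\<close> by (simp add: field_simps)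
    then show ?thesis unfolding renyi_entropy_def T_def using \<open>\<gamma> > 0\<close> \<open>\<rho> > 0\<close> by simp
  qed
  have r2: "\<gamma> * \<rho> / (1 + \<gamma>) * renyi_entropy P (1 / (1 + \<gamma>)) = \<rho> * ln S"
  proof -
    have "1 - 1 / (1 + \<gamma>) = \<gamma> / (1 + \<gamma>)" using \<open>\<gamma> > 0\<close> by (simp add: field_simps)
    then show ?thesis unfolding renyi_entropy_def S_def a_def using \<open>\<gamma> > 0\<close> \<open>\<rho> > 0\<close> by simp
  qed
  have "L \<ge> 0" using S_pos T_pos L_eq by simp
  then show ?thesis using integral lnL r1 r2 by simp
qed
end
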